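(* Let $a, b$ be positive integers with $b \le 2a$, and let $T_{a,b} = \{C_{i,1} : 1 \le i \le 2a+1\} \cup \{C_{a+1,j} : 2 \le j \le b+1\}$, of size $n = 2a+b+1$. Then on the $n \times n$ board, $$\mathrm{cp}_{\mathrm{fixed}}(T_{a,b}) = \left\lceil \frac{2a+1}{2b+1} \right\rceil.$$
   Context: For integers $i,j$, $C_{i,j}$ denotes the unit square cell in column $i$ and row $j$ of the integer grid (columns numbered left to right, rows numbered top to bottom). A polyomino is a finite set of cells; its size is its number of cells. For a polyomino $\mathcal{P}$ of size $n$ the board is $\mathbb{B} = \{C_{i,j} : 1 \le i,j \le n\}$. The shift of $\mathcal{P}$ by integers $(c,d)$ is $\mathcal{P}+(c,d) = \{C_{x+c,y+d} : C_{x,y} \in \mathcal{P}\}$; a fixed copy of $\mathcal{P}$ is any shift of $\mathcal{P}$ (no rotations). A set of polyominoes is a valid arrangement if each is contained in $\mathbb{B}$ and they are pairwise disjoint. A fixed packing of $\mathcal{P}$ is a set of fixed copies of $\mathcal{P}$ forming a valid arrangement such that adding any further fixed copy of $\mathcal{P}$ yields an invalid arrangement. The clumsy fixed packing number $\mathrm{cp}_{\mathrm{fixed}}(\mathcal{P})$ is the minimum number of polyominoes in a fixed packing of $\mathcal{P}$ on the $n \times n$ board. *)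

theory Defs
  imports Complex_Main
begin

text \<open>A cell C_{i,j} is represented by the pair (i, j) :: int \<times> int
  (i = column, j = row). A polyomino is a finite set of cells.\<close>

type_synonym cell = "int \<times> int"

definition board :: "nat \<Rightarrow> cell set" where
  "board n = {1..int n} \<times> {1..int n}"

definition shift :: "cell set \<Rightarrow> int \<Rightarrow> int \<Rightarrow> cell set" where
  "shift P c d = (\<lambda>(x, y). (x + c, y + d)) ` P"

definition fixed_copy :: "cell set \<Rightarrow> cell set \<Rightarrow> bool" where
  "fixed_copy P Q \<longleftrightarrow> (\<exists>c d. Q = shift P c d)"

definition valid_arrangement :: "nat \<Rightarrow> cell set set \<Rightarrow> bool" where
  "valid_arrangement n S \<longleftrightarrow>
     (\<forall>Q\<in>S. Q \<subseteq> board n) \<and> (\<forall>Q\<in>S. \<forall>R\<in>S. Q \<noteq> R \<longrightarrow> Q \<inter> R = {})"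

definition fixed_packing :: "cell set \<Rightarrow> cell set set \<Rightarrow> bool" where
  "fixed_packing P S \<longleftrightarrow>
     (\<forall>Q\<in>S. fixed_copy P Q) \<and> valid_arrangement (card P) S \<and>
     (\<forall>Q. fixed_copy P Q \<and> Q \<notin> S \<longrightarrow> \<not> valid_arrangement (card P) (insert Q S))"

definition cp_fixed :: "cell set \<Rightarrow> nat" where
  "cp_fixed P = Min (card ` {S. fixed_packing P S})"

definition T_shape :: "nat \<Rightarrow> nat \<Rightarrow> cell set" where
  "T_shape a b = {(i, 1) | i. 1 \<le> i \<and> i \<le> 2 * int a + 1}
               \<union> {(int a + 1, j) | j. 2 \<le> j \<and> j \<le> int b + 1}"

end

theory Submission
  imports Defs
begin


lemma mem_shiftT:
  "((x,y) \<in> shift (T_shape a b) c d) =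
   ((y = 1 + d \<and> c + 1 \<le> x \<and> x \<le> c + 2 * int a + 1) \<or>
    (x = int a + 1 + c \<and> d + 2 \<le> y \<and> y \<le> d + int b + 1))"
proof
  assume "(x,y) \<in> shift (T_shape a b) c d"
  then show "(y = 1 + d \<and> c + 1 \<le> x \<and> x \<le> c + 2 * int a + 1) \<or>
    (x = int a + 1 + c \<and> d + 2 \<le> y \<and> y \<le> d + int b + 1)"
    unfolding shift_def T_shape_def by auto
next
  assume h: "(y = 1 + d \<and> c + 1 \<le> x \<and> x \<le> c + 2 * int a + 1) \<or>
    (x = int a + 1 + c \<and> d + 2 \<le> y \<and> y \<le> d + int b + 1)"
  have "(x - c, y - d) \<in> T_shape a b" using h unfolding T_shape_def by auto
  moreover have "(x,y) = (\<lambda>(x, y). (x + c, y + d)) (x - c, y - d)" by simp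
  ultimately show "(x,y) \<in> shift (T_shape a b) c d" unfolding shift_def by blast
qed

lemma shiftT_inj:
  assumes "shift (T_shape a b) c d = shift (T_shape a b) c' d'"
  shows "c = c' \<and> d = d'"
proof -
  have "(c+1, d+1) \<in> shift (T_shape a b) c d" by (simp add: mem_shiftT)
  hence "(c+1, d+1) \<in> shift (T_shape a b) c' d'" using assms by simp
  hence 1: "c' \<le> c \<and> d' \<le> d" by (auto simp: mem_shiftT)
  have "(c'+1, d'+1) \<in> shift (T_shape a b) c' d'" by (simp add: mem_shiftT)
  hence "(c'+1, d'+1) \<in> shift (T_shape a b) c d" using assms by simp
  hence "c \<le> c' \<and> d \<le> d'" by (auto simp: mem_shiftT)
  with 1 show ?thesis by auto
qed

lemma row_close:
  assumes "z \<in> shift (T_shape a b) c d" "z \<in> shift (T_shape a b) c' d'"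
  shows "\<bar>d - d'\<bar> \<le> int b"
proof -
  obtain x y where z: "z = (x,y)" by fastforce
  show ?thesis using assms unfolding z mem_shiftT by auto
qed

lemma in_board:
  assumes "0 \<le> c" "c \<le> int b" "0 \<le> d" "d \<le> 2 * int a"
  shows "shift (T_shape a b) c d \<subseteq> board (2*a+b+1)"
proof
  fix z assume "z \<in> shift (T_shape a b) c d"
  moreover obtain x y where z: "z = (x,y)" by fastforce
  ultimately show "z \<in> board (2*a+b+1)" using assms
    unfolding board_def z mem_shiftT by auto
qed

lemma board_bounds:
  assumes "shift (T_shape a b) c d \<subseteq> board (2*a+b+1)" "0 < b"
  shows "0 \<le> c \<and> c \<le> int b \<and> 0 \<le> d \<and> d \<le> 2 * int a"
proof -
  have "(c+1, d+1) \<in> board (2*a+b+1)" using assms(1) by (auto simp: mem_shiftT)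
  moreover have "(c+2*int a+1, d+1) \<in> board (2*a+b+1)" using assms(1) by (auto simp: mem_shiftT)
  moreover have "(int a+1+c, d+int b+1) \<in> board (2*a+b+1)" using assms by (auto simp: mem_shiftT)
  ultimately show ?thesis unfolding board_def by auto
qed

lemma hit:
  assumes "\<bar>c - m\<bar> \<le> int a" "\<bar>d - e\<bar> \<le> int b"
  shows "shift (T_shape a b) c d \<inter> shift (T_shape a b) m e \<noteq> {}"
proof -
  consider "d = e" | "d > e" | "d < e" by linarith
  then show ?thesis
  proof cases
    case 1
    have "(max c m + 1, 1 + d) \<in> shift (T_shape a b) c d \<inter> shift (T_shape a b) m e"
      using assms 1 unfolding Int_iff mem_shiftT by auto
    then show ?thesis by blast
  next
    case 2
    have "(int a + 1 + m, 1 + d) \<in> shift (T_shape a b) c d \<inter> shift (T_shape a b) m e"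
      using assms 2 unfolding Int_iff mem_shiftT by auto
    then show ?thesis by blast
  next
    case 3
    have "(int a + 1 + c, 1 + e) \<in> shift (T_shape a b) c d \<inter> shift (T_shape a b) m e"
      using assms 3 unfolding Int_iff mem_shiftT by auto
    then show ?thesis by blast
  qed
qed

lemma card_T: "card (T_shape a b) = 2 * a + b + 1"
proof -
  have e: "T_shape a b = (\<lambda>i. (i, 1)) ` {1..2 * int a + 1} \<union> (\<lambda>j. (int a + 1, j)) ` {2..int b + 1}"
    unfolding T_shape_def by auto
  have "card (T_shape a b) = card ((\<lambda>i. (i, 1::int)) ` {1..2 * int a + 1}) + card ((\<lambda>j. (int a + 1, j)) ` {2..int b + 1})"
    unfolding e by (rule card_Un_disjoint) auto
  also have "\<dots> = card {1..2 * int a + 1} + card {2..int b + 1}"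
    by (subst card_image, simp add: inj_on_def)+ simp
  finally show ?thesis by simp
qed



lemma kfacts:
  fixes a b :: nat
  defines "k \<equiv> (2*a+1+2*b) div (2*b+1)"
  shows "2*a+1 \<le> k*(2*b+1) \<and> (k-1)*(2*b+1) < 2*a+1 \<and> 1 \<le> k"
proof -
  have d: "2*a+1+2*b = k*(2*b+1) + (2*a+1+2*b) mod (2*b+1)" unfolding k_def by (metis div_mult_mod_eq)
  have m: "(2*a+1+2*b) mod (2*b+1) < 2*b+1" by simp
  have "1 \<le> k"
  proof (rule ccontr)
    assume "\<not> 1 \<le> k" hence "k = 0" by simp
    with d m show False by simp
  qed
  moreover have "2*a+1 \<le> k*(2*b+1)" using d m by linarith
  moreover have "(k-1)*(2*b+1) < 2*a+1" using d m \<open>1 \<le> k\<close>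
    by (simp add: diff_mult_distrib)
  ultimately show ?thesis by blast
qed

lemma ceil_k:
  fixes p q k :: nat
  assumes "p \<le> k*q" "(k-1)*q < p" "1 \<le> k" "0 < q"
  shows "\<lceil>real p / real q\<rceil> = int k"
proof (rule ceiling_unique)
  have "real p \<le> real k * real q" using assms(1) by (metis of_nat_le_iff of_nat_mult)
  then show "real p / real q \<le> real_of_int (int k)" using assms(4) by (simp add: divide_le_eq)
  have "real (k-1) * real q < real p" using assms(2) by (metis of_nat_less_iff of_nat_mult)
  hence "(real k - 1) * real q < real p" using assms(3) by (simp add: of_nat_diff)
  then show "real_of_int (int k) - 1 < real p / real q" using assms(4) by (simp add: less_divide_eq)
qed

theorem theorem6:
  fixes a b :: nat
  assumes "0 < a" and "0 < b" and "b \<le> 2 * a"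
  shows "card (T_shape a b) = 2 * a + b + 1 \<and>
         int (cp_fixed (T_shape a b)) = \<lceil>real (2 * a + 1) / real (2 * b + 1)\<rceil>"
proof -
  let ?T = "T_shape a b"
  define k where "k = (2*a+1+2*b) div (2*b+1)"
  have kf: "2*a+1 \<le> k*(2*b+1)" "(k-1)*(2*b+1) < 2*a+1" "1 \<le> k"
    using kfacts[of a b] unfolding k_def by auto
  have ceq: "\<lceil>real (2 * a + 1) / real (2 * b + 1)\<rceil> = int k"
    using ceil_k[OF kf] by simp
  have cT: "card ?T = 2*a+b+1" by (rule card_T)
  define Cop where "Cop = (\<lambda>(c,d). shift ?T c d) ` ({0..int b} \<times> {0..2*int a})"
  have fCop: "finite Cop" unfolding Cop_def by simp
  have subCop: "S \<subseteq> Cop" if SP0: "fixed_packing ?T S" for S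
  proof
    fix Q assume Q: "Q \<in> S"
    then obtain c d where Qe: "Q = shift ?T c d" using SP0 unfolding fixed_packing_def fixed_copy_def by blast
    have "Q \<subseteq> board (2*a+b+1)" using SP0 Q cT unfolding fixed_packing_def valid_arrangement_def by auto
    hence "0 \<le> c \<and> c \<le> int b \<and> 0 \<le> d \<and> d \<le> 2 * int a" using board_bounds assms(2) Qe by blast
    then show "Q \<in> Cop" unfolding Cop_def Qe by force
  qed
  define Packs where "Packs = {S. fixed_packing ?T S}"
  have fP: "finite Packs"
    by (rule finite_subset[of _ "Pow Cop"]) (use subCop fCop in \<open>auto simp: Packs_def\<close>)
  have lower: "k \<le> card S" if SP: "fixed_packing ?T S" for S
  proof -
    have fS: "finite S" using subCop[OF SP] fCop finite_subset by blast
    define g where "g Q = (SOME d. \<exists>c. Q = shift ?T c d)" for Q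
    have gS: "\<exists>c. Q = shift ?T c (g Q)" if QS: "Q \<in> S" for Q
    proof -
      have ex: "\<exists>d c. Q = shift ?T c d" using SP QS unfolding fixed_packing_def fixed_copy_def by blast
      show ?thesis unfolding g_def by (rule someI_ex[OF ex])
    qed
    have cover: "{0..2*int a} \<subseteq> (\<Union>Q\<in>S. {g Q - int b .. g Q + int b})"
    proof
      fix d assume d: "d \<in> {0..2*int a}"
      let ?Q0 = "shift ?T 0 d"
      have Q0b: "?Q0 \<subseteq> board (card ?T)" using in_board[of 0 b d a] d cT by auto
      show "d \<in> (\<Union>Q\<in>S. {g Q - int b .. g Q + int b})"
      proof (cases "?Q0 \<in> S")
        case True
        then obtain c where "?Q0 = shift ?T c (g ?Q0)" using gS by blast
        hence "g ?Q0 = d" using shiftT_inj by metis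
        then show ?thesis using True by force
      next
        case False
        have fc: "fixed_copy ?T ?Q0" unfolding fixed_copy_def by blast
        hence nv: "\<not> valid_arrangement (card ?T) (insert ?Q0 S)" using SP False unfolding fixed_packing_def by blast
        have vS: "valid_arrangement (card ?T) S" using SP unfolding fixed_packing_def by blast
        have "\<exists>R\<in>S. R \<noteq> ?Q0 \<and> ?Q0 \<inter> R \<noteq> {}"
        proof (rule ccontr)
          assume nR: "\<not> (\<exists>R\<in>S. R \<noteq> ?Q0 \<and> ?Q0 \<inter> R \<noteq> {})"
          have "valid_arrangement (card ?T) (insert ?Q0 S)"
            unfolding valid_arrangement_def
          proof (intro conjI ballI impI)
            fix Q assume "Q \<in> insert ?Q0 S"
            then show "Q \<subseteq> board (card ?T)" using Q0b vS unfolding valid_arrangement_def by blast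
          next
            fix Q R assume QR: "Q \<in> insert ?Q0 S" "R \<in> insert ?Q0 S" "Q \<noteq> R"
            show "Q \<inter> R = {}"
            proof (cases "Q = ?Q0")
              case True
              then show ?thesis using QR nR by blast
            next
              case False
              show ?thesis
              proof (cases "R = ?Q0")
                case True
                then have "R \<inter> Q = {}" using QR nR False by blast
                then show ?thesis by (simp add: Int_commute)
              next
                case False2: False
                then show ?thesis using QR False vS unfolding valid_arrangement_def by blast
              qed
            qed
          qed
          with nv show False by blast
        qed
        then obtain R where R: "R \<in> S" "R \<noteq> ?Q0" "?Q0 \<inter> R \<noteq> {}" by blast
        obtain c where Rc: "R = shift ?T c (g R)" using gS R(1) by blast
        obtain z where "z \<in> ?Q0" "z \<in> R" using R(3) by blast
        hence "\<bar>d - g R\<bar> \<le> int b" using row_close[of z a b 0 d c "g R"] Rc by auto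
        then show ?thesis using R(1) by force
      qed
    qed
    have "2*a+1 = card {0..2*int a}" by simp
    also have "\<dots> \<le> card (\<Union>Q\<in>S. {g Q - int b .. g Q + int b})"
      by (rule card_mono[OF _ cover]) (simp add: fS)
    also have "\<dots> \<le> (\<Sum>Q\<in>S. card {g Q - int b .. g Q + int b})"
      by (rule card_UN_le[OF fS])
    also have "\<dots> = card S * (2*b+1)"
    proof -
      have "card {g Q - int b .. g Q + int b} = 2*b+1" for Q by simp
      then show ?thesis by simp
    qed
    finally have "2*a+1 \<le> card S * (2*b+1)" .
    with kf(2) have "(k-1)*(2*b+1) < card S * (2*b+1)" by linarith
    hence "k - 1 < card S" by (metis mult_less_cancel2)
    then show ?thesis by linarith
  qed
  define m where "m = int (b div 2)"
  define dd where "dd i = min (int b + int i * (2*int b+1)) (2*int a)" for i :: nat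
  have P1: "0 \<le> dd i \<and> dd i \<le> 2*int a" for i
  proof -
    have "0 \<le> int i * (2*int b+1)" by simp
    then show ?thesis unfolding dd_def min_def by (split if_split, intro conjI impI; linarith)
  qed
  have P2: "dd i + int b < dd j" if "i < j" "j < k" for i j
  proof -
    have A: "int (k-1) * (2*int b+1) < 2*int a+1" using kf(2)
      by (metis (mono_tags, opaque_lifting) of_nat_1 of_nat_add of_nat_less_iff of_nat_mult of_nat_numeral)
    have "int i + 1 \<le> int (k-1)" using that by linarith
    hence "(int i + 1) * (2*int b+1) \<le> int (k-1) * (2*int b+1)"
      by (rule mult_right_mono) simp
    hence B: "int i * (2*int b+1) + (2*int b+1) \<le> int (k-1) * (2*int b+1)"
      by (simp add: algebra_simps)
    have "int i + 1 \<le> int j" using that by linarith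
    hence "(int i + 1) * (2*int b+1) \<le> int j * (2*int b+1)"
      by (rule mult_right_mono) simp
    hence C: "int i * (2*int b+1) + (2*int b+1) \<le> int j * (2*int b+1)"
      by (simp add: algebra_simps)
    show ?thesis unfolding dd_def min_def using A B C
      by (split if_split, intro conjI impI; split if_split, intro conjI impI; linarith)
  qed
  have P3: "\<exists>i<k. \<bar>d - dd i\<bar> \<le> int b" if "0 \<le> d" "d \<le> 2*int a" for d
  proof -
    define i where "i = nat (d div (2*int b+1))"
    have q: "d = (d div (2*int b+1)) * (2*int b+1) + d mod (2*int b+1)" by (metis div_mult_mod_eq)
    have r: "0 \<le> d mod (2*int b+1)" "d mod (2*int b+1) < 2*int b+1" by (simp, rule pos_mod_bound, simp)
    have dv: "0 \<le> d div (2*int b+1)" using that by (simp add: pos_imp_zdiv_nonneg_iff)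
    hence ie: "int i = d div (2*int b+1)" unfolding i_def by simp
    have q': "d = int i * (2*int b+1) + d mod (2*int b+1)" using q ie by simp
    have K: "int k * (2*int b+1) \<ge> 2*int a+1" using kf(1)
      by (metis (mono_tags, opaque_lifting) of_nat_1 of_nat_add of_nat_le_iff of_nat_mult of_nat_numeral)
    have "int i < int k"
    proof (rule ccontr)
      assume "\<not> int i < int k"
      hence "int k * (2*int b+1) \<le> int i * (2*int b+1)"
        by (intro mult_right_mono) simp_all
      then show False using K q' r that by linarith
    qed
    hence ik: "i < k" by simp
    have "\<bar>d - dd i\<bar> \<le> int b" unfolding dd_def min_def using q' r that
      by (split if_split, intro conjI impI; linarith)
    with ik show ?thesis by blast
  qed
  define S0 where "S0 = (\<lambda>i. shift ?T m (dd i)) ` {0..<k}"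
  have inj: "inj_on (\<lambda>i. shift ?T m (dd i)) {0..<k}"
  proof (rule inj_onI)
    fix i j assume "i \<in> {0..<k}" "j \<in> {0..<k}" "shift ?T m (dd i) = shift ?T m (dd j)"
    hence "dd i = dd j" "i < k" "j < k" using shiftT_inj by auto
    then show "i = j" using P2[of i j] P2[of j i] assms(2) by (cases "i < j"; cases "j < i") auto
  qed
  have cS0: "card S0 = k" unfolding S0_def using card_image[OF inj] by simp
  have mb: "0 \<le> m" "m \<le> int b" unfolding m_def by auto
  have cm: "\<bar>c - m\<bar> \<le> int a" if "0 \<le> c" "c \<le> int b" for c
    unfolding m_def using that assms(3) by linarith
  have S0v: "valid_arrangement (card ?T) S0"
    unfolding valid_arrangement_def
  proof (intro conjI ballI impI)
    fix Q assume "Q \<in> S0"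
    then obtain i where "Q = shift ?T m (dd i)" unfolding S0_def by blast
    then show "Q \<subseteq> board (card ?T)" using in_board[of m b "dd i" a] mb P1[of i] cT by simp
  next
    fix Q R assume "Q \<in> S0" "R \<in> S0" "Q \<noteq> R"
    assume QRS: "Q \<in> S0" "R \<in> S0"
    obtain i where i0: "Q = shift ?T m (dd i)" "i < k" using QRS(1) unfolding S0_def by auto
    obtain j where j0: "R = shift ?T m (dd j)" "j < k" using QRS(2) unfolding S0_def by auto
    have ij0: "Q = shift ?T m (dd i)" "R = shift ?T m (dd j)" "i < k" "j < k" using i0 j0 by auto
    with \<open>Q \<noteq> R\<close> have ij: "Q = shift ?T m (dd i)" "R = shift ?T m (dd j)" "i < k" "j < k" "i \<noteq> j"
      by auto
    show "Q \<inter> R = {}"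
    proof (rule ccontr)
      assume "Q \<inter> R \<noteq> {}"
      then obtain z where "z \<in> Q" "z \<in> R" by blast
      hence "\<bar>dd i - dd j\<bar> \<le> int b" using row_close ij by metis
      then show False using P2[of i j] P2[of j i] ij by (cases "i < j") auto
    qed
  qed
  have S0p: "fixed_packing ?T S0"
    unfolding fixed_packing_def
  proof (intro conjI allI impI ballI S0v)
    fix Q assume "Q \<in> S0"
    then show "fixed_copy ?T Q" unfolding S0_def fixed_copy_def by blast
  next
    fix Q assume h: "fixed_copy ?T Q \<and> Q \<notin> S0"
    then obtain c d where Qe: "Q = shift ?T c d" unfolding fixed_copy_def by blast
    show "\<not> valid_arrangement (card ?T) (insert Q S0)"
    proof
      assume v: "valid_arrangement (card ?T) (insert Q S0)"
      hence "Q \<subseteq> board (2*a+b+1)" unfolding valid_arrangement_def cT by blast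
      hence bd: "0 \<le> c \<and> c \<le> int b \<and> 0 \<le> d \<and> d \<le> 2 * int a" using board_bounds assms(2) Qe by blast
      then obtain i where i: "i < k" "\<bar>d - dd i\<bar> \<le> int b" using P3 by blast
      let ?R = "shift ?T m (dd i)"
      have R: "?R \<in> S0" unfolding S0_def using i by auto
      have "Q \<noteq> ?R" using h R by auto
      moreover have "Q \<inter> ?R \<noteq> {}" unfolding Qe by (rule hit) (use cm bd i in auto)
      ultimately show False using v R unfolding valid_arrangement_def by blast
    qed
  qed
  have "cp_fixed ?T = k"
    unfolding cp_fixed_def
  proof (rule Min_eqI)
    show "finite (card ` {S. fixed_packing ?T S})" using fP unfolding Packs_def by simp
    show "\<And>y. y \<in> card ` {S. fixed_packing ?T S} \<Longrightarrow> k \<le> y" using lower by blast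
    show "k \<in> card ` {S. fixed_packing ?T S}" using S0p cS0 by force
  qed
  then show ?thesis using cT ceq by simp
qed

end
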